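(* Let $(V,g)$ be a Euclidean vector space and $\mathfrak{g}\subseteq\mathfrak{so}(V)$ a nonzero Lie subalgebra. If there is a nonzero spinor $x$ with $\mathfrak{g}x=0$ (for the spin representation of $\mathfrak{spin}(V)\cong\mathfrak{so}(V)$), then $T^{\mathfrak{g}}\neq0$.
   Context: $\Lambda^2V$ is identified with $\mathfrak{so}(V)$ via the metric, with the standard inner product on forms. $T^{\mathfrak{g}}=\sum_kx_k\wedge x_k\in\Lambda^4V$ for an orthonormal basis $\{x_k\}$ of $\mathfrak{g}\subseteq\Lambda^2V$ (the characteristic form of $(\mathfrak{g},V)$). *)

theory Defs
  imports "HOL-Analysis.Analysis"
begin

text \<open>Lambda^2 V is identified with so(V), i.e. with the
skew-symmetric matrices A (A = sum_{i<j} A_ij e_i wedge e_j).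
Lambda^4 V is represented by alternating 4-forms 'n => 'n => 'n => 'n => real.\<close>

definition skew :: "real^'n^'n \<Rightarrow> bool" where
  "skew A \<longleftrightarrow> (\<forall>i j. A $ i $ j = - (A $ j $ i))"

definition lie_subalgebra_so :: "(real^'n^'n) set \<Rightarrow> bool" where
  "lie_subalgebra_so g \<longleftrightarrow> subspace g \<and> (\<forall>A\<in>g. skew A) \<and>
     (\<forall>A\<in>g. \<forall>B\<in>g. A ** B - B ** A \<in> g)"

text \<open>Standard inner product on 2-forms: sum over i<j of A_ij B_ij.\<close>
definition form_inner2 :: "real^'n^'n \<Rightarrow> real^'n^'n \<Rightarrow> real" where
  "form_inner2 A B = (1/2) * (\<Sum>i\<in>UNIV. \<Sum>j\<in>UNIV. A $ i $ j * B $ i $ j)"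

definition orthonormal_basis_of :: "(real^'n^'n) set \<Rightarrow> (real^'n^'n) set \<Rightarrow> bool" where
  "orthonormal_basis_of B g \<longleftrightarrow> finite B \<and> B \<subseteq> g \<and> span B = g \<and>
     (\<forall>X\<in>B. form_inner2 X X = 1) \<and>
     (\<forall>X\<in>B. \<forall>Y\<in>B. X \<noteq> Y \<longrightarrow> form_inner2 X Y = 0)"

text \<open>Wedge product of two 2-forms, as an alternating 4-form:
  (a wedge b)(e_i,e_j,e_k,e_l) = sum over the 6 (2,2)-shuffles.\<close>
definition wedge22 :: "real^'n^'n \<Rightarrow> real^'n^'n \<Rightarrow> 'n \<Rightarrow> 'n \<Rightarrow> 'n \<Rightarrow> 'n \<Rightarrow> real" where
  "wedge22 a b i j k l =
      a$i$j * b$k$l - a$i$k * b$j$l + a$i$l * b$j$k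
    + a$j$k * b$i$l - a$j$l * b$i$k + a$k$l * b$i$j"

text \<open>Characteristic form T^g = sum_k x_k wedge x_k for an orthonormal basis {x_k} of g.\<close>
definition char_form :: "(real^'n^'n) set \<Rightarrow> 'n \<Rightarrow> 'n \<Rightarrow> 'n \<Rightarrow> 'n \<Rightarrow> real" where
  "char_form B = (\<lambda>i j k l. \<Sum>X\<in>B. wedge22 X X i j k l)"

text \<open>A complex Clifford module for (V,g): c i = Clifford multiplication by e_i on
S = complex^'m, with c_i c_j + c_j c_i = -2 delta_ij.\<close>
definition clifford_module :: "('n \<Rightarrow> complex^'m^'m) \<Rightarrow> bool" where
  "clifford_module c \<longleftrightarrow>
     (\<forall>i j. c i ** c j + c j ** c i = mat (if i = j then -2 else 0))"

definition complex_subspace :: "(complex^'m) set \<Rightarrow> bool" where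
  "complex_subspace W \<longleftrightarrow> 0 \<in> W \<and> (\<forall>x\<in>W. \<forall>y\<in>W. x + y \<in> W) \<and>
     (\<forall>a::complex. \<forall>x\<in>W. a *s x \<in> W)"

definition spinor_module :: "('n \<Rightarrow> complex^'m^'m) \<Rightarrow> bool" where
  "spinor_module c \<longleftrightarrow> clifford_module c \<and>
     (\<forall>W. complex_subspace W \<and> (\<forall>i. \<forall>x\<in>W. c i *v x \<in> W) \<longrightarrow> W = {0} \<or> W = UNIV)"

text \<open>Spin representation of so(V) = Lambda^2 V on spinors:
  e_i wedge e_j acts as (1/2) e_i e_j, i.e. A acts as (1/4) sum_{i,j} A_ij c_i c_j.\<close>
definition spin_act :: "('n \<Rightarrow> complex^'m^'m) \<Rightarrow> real^'n^'n \<Rightarrow> complex^'m \<Rightarrow> complex^'m" where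
  "spin_act c A x = (\<Sum>i\<in>UNIV. \<Sum>j\<in>UNIV.
      complex_of_real (A $ i $ j / 4) *s (c i *v (c j *v x)))"

end

theory Submission
  imports Defs
begin

lemma mv_lin: "linear ((*v) (A::complex^'m^'m))"
  using matrix_vector_mul_bounded_linear bounded_linear.linear by blast

lemma mv_sum: "(A::complex^'m^'m) *v (sum f S) = (\<Sum>s\<in>S. A *v f s)"
  using linear_sum[OF mv_lin] by auto
lemma mv_scale: "(A::complex^'m^'m) *v (r *\<^sub>R v) = r *\<^sub>R (A *v v)"
  using linear_scale[OF mv_lin] by auto
lemma mv_add: "(A::complex^'m^'m) *v (v + w) = A *v v + A *v w"
  using linear_add[OF mv_lin] by auto
lemma mv_diff: "(A::complex^'m^'m) *v (v - w) = A *v v - A *v w"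
  using linear_diff[OF mv_lin] by auto
lemma mv_neg: "(A::complex^'m^'m) *v (- v) = - (A *v v)"
  using linear_neg[OF mv_lin] by auto
lemma mv_zero: "(A::complex^'m^'m) *v 0 = 0"
  using linear_0[OF mv_lin] by auto

lemma mat_mv: "(mat z :: complex^'m^'m) *v v = z *s v"
  by (simp add: vec_eq_iff matrix_vector_mult_def mat_def if_distrib[of "\<lambda>a. a * _"] cong: if_cong)
lemma smult_real: "complex_of_real r *s (v::complex^'m) = r *\<^sub>R v"
  apply (simp add: vec_eq_iff vector_scaleR_component) 
  by (simp add: scaleR_conv_of_real)

lemma comm:
  assumes "clifford_module (c :: 'n::finite \<Rightarrow> complex^'m^'m)"
  shows "c a *v (c b *v w) = - (c b *v (c a *v w)) - (if a = b then 2 else 0) *\<^sub>R w"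
proof -
  have "(c a ** c b + c b ** c a) *v w = mat (if a=b then -2 else 0) *v w"
    using assms by (simp add: clifford_module_def)
  hence "c a *v (c b *v w) + c b *v (c a *v w) = (if a=b then -2 else 0) *s w"
    by (simp add: matrix_vector_mul_assoc matrix_vector_mult_add_rdistrib mat_mv)
  also have "\<dots> = complex_of_real (if a=b then -2 else 0) *s w" by simp
  also have "\<dots> = (if a=b then -2 else 0) *\<^sub>R w" by (rule smult_real)
  finally have e: "c a *v (c b *v w) + c b *v (c a *v w) = (if a=b then -2 else 0) *\<^sub>R w" .
  have "c a *v (c b *v w) = (if a=b then -2 else 0) *\<^sub>R w - c b *v (c a *v w)"
    using e by (metis add_diff_cancel_right')
  thus ?thesis by (cases "a=b") (simp_all add: algebra_simps)
qed

lemma symsum: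
  assumes cl: "clifford_module (c :: 'n::finite \<Rightarrow> complex^'m^'m)"
    and sym: "\<And>i l. s i l = s l i"
  shows "(\<Sum>i\<in>UNIV. \<Sum>l\<in>UNIV. s i l *\<^sub>R (c i *v (c l *v x))) = - (\<Sum>i\<in>UNIV. s i i) *\<^sub>R x"
proof -
  define M where "M = (\<Sum>i\<in>UNIV. \<Sum>l\<in>UNIV. s i l *\<^sub>R (c i *v (c l *v x)))"
  have "M = (\<Sum>i\<in>UNIV. \<Sum>l\<in>UNIV. s i l *\<^sub>R (- (c l *v (c i *v x)) - (if i = l then 2 else 0) *\<^sub>R x))"
    unfolding M_def by (intro sum.cong refl, subst comm[OF cl], rule refl)
  also have "\<dots> = - (\<Sum>i\<in>UNIV. \<Sum>l\<in>UNIV. s i l *\<^sub>R (c l *v (c i *v x)))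
        - (\<Sum>i\<in>UNIV. \<Sum>l\<in>UNIV. (s i l * (if i = l then 2 else 0)) *\<^sub>R x)"
    by (simp add: scaleR_diff_right sum_subtractf sum_negf)
  also have "(\<Sum>i\<in>UNIV. \<Sum>l\<in>UNIV. s i l *\<^sub>R (c l *v (c i *v x))) = M"
    unfolding M_def by (subst sum.swap) (simp add: sym)
  also have "(\<Sum>i\<in>UNIV. \<Sum>l\<in>UNIV. (s i l * (if i = l then 2 else 0)) *\<^sub>R x)
      = (2 * (\<Sum>i\<in>UNIV. s i i)) *\<^sub>R x"
  proof -
    have "\<And>i. (\<Sum>l\<in>UNIV. s i l * (if i = l then 2 else 0)) = (\<Sum>l\<in>UNIV. if l = i then 2 * s i i else 0)"
      by (intro sum.cong) auto
    hence "\<And>i. (\<Sum>l\<in>UNIV. s i l * (if i = l then 2 else 0)) = 2 * s i i" by simp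
    thus ?thesis by (simp add: scaleR_sum_left[symmetric] sum_distrib_left)
  qed
  finally have eq: "M = - M - (2 * (\<Sum>i\<in>UNIV. s i i)) *\<^sub>R x" .
  have "M + M = (- M - (2 * (\<Sum>i\<in>UNIV. s i i)) *\<^sub>R x) + M"
    using eq by (rule arg_cong)
  hence "M + M = - (2 * (\<Sum>i\<in>UNIV. s i i)) *\<^sub>R x" by simp
  hence "2 *\<^sub>R M = - (2 * (\<Sum>i\<in>UNIV. s i i)) *\<^sub>R x" by (simp add: scaleR_2)
  hence "M = - (\<Sum>i\<in>UNIV. s i i) *\<^sub>R x"
    by (metis (no_types, lifting) mult_minus_right scaleR_cancel_left scaleR_scaleR zero_neq_numeral)
  thus ?thesis unfolding M_def .
qed

definition Pv :: "('n \<Rightarrow> complex^'m^'m) \<Rightarrow> complex^'m \<Rightarrow> 'n \<Rightarrow> 'n \<Rightarrow> 'n \<Rightarrow> 'n \<Rightarrow> complex^'m" where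
  "Pv c x i j k l = c i *v (c j *v (c k *v (c l *v x)))"

definition Cq :: "('n::finite \<Rightarrow> complex^'m^'m) \<Rightarrow> real^'n^'n \<Rightarrow> complex^'m \<Rightarrow> complex^'m" where
  "Cq c X x = (\<Sum>i\<in>UNIV. \<Sum>j\<in>UNIV. \<Sum>k\<in>UNIV. \<Sum>l\<in>UNIV. (X$i$j * X$k$l) *\<^sub>R Pv c x i j k l)"

definition NX :: "real^'n^'n \<Rightarrow> real" where
  "NX X = (\<Sum>i\<in>UNIV. \<Sum>j\<in>UNIV. X$i$j * X$i$j)"

lemma delta_sum:
  fixes v :: "'a::finite \<Rightarrow> complex^'m"
  shows "(\<Sum>k\<in>UNIV. (a k * b * (if j = k then 2 else 0)) *\<^sub>R v k) = (2 * a j * b) *\<^sub>R v j"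
proof -
  have "(\<Sum>k\<in>UNIV. (a k * b * (if j = k then 2 else 0)) *\<^sub>R v k)
      = (\<Sum>k\<in>UNIV. if k = j then (2 * a j * b) *\<^sub>R v j else 0)"
    by (intro sum.cong) auto
  thus ?thesis by simp
qed

lemma E1:
  assumes cl: "clifford_module (c :: 'n::finite \<Rightarrow> complex^'m^'m)" and sk: "skew X"
  shows "(\<Sum>i\<in>UNIV. \<Sum>l\<in>UNIV. (\<Sum>j\<in>UNIV. X$i$j * X$j$l) *\<^sub>R (c i *v (c l *v x))) = NX X *\<^sub>R x"
proof -
  have sk': "X$i$j = - X$j$i" for i j using sk unfolding skew_def by blast
  have "(\<Sum>i\<in>UNIV. \<Sum>l\<in>UNIV. (\<Sum>j\<in>UNIV. X$i$j * X$j$l) *\<^sub>R (c i *v (c l *v x)))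
     = - (\<Sum>i\<in>UNIV. (\<Sum>j\<in>UNIV. X$i$j * X$j$i)) *\<^sub>R x"
  proof (rule symsum[OF cl])
    fix i l
    have "X$i$j * X$j$l = X$l$j * X$j$i" for j
      using sk'[of i j] sk'[of j l] by simp
    thus "(\<Sum>j\<in>UNIV. X$i$j * X$j$l) = (\<Sum>j\<in>UNIV. X$l$j * X$j$i)" by simp
  qed
  also have "- (\<Sum>i\<in>UNIV. (\<Sum>j\<in>UNIV. X$i$j * X$j$i)) = NX X"
  proof -
    have "X$i$j * X$j$i = - (X$i$j * X$i$j)" for i j
      using sk'[of j i] by simp
    thus ?thesis by (simp add: NX_def sum_negf)
  qed
  finally show ?thesis .
qed

lemma E2:
  assumes cl: "clifford_module (c :: 'n::finite \<Rightarrow> complex^'m^'m)"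
  shows "(\<Sum>i\<in>UNIV. \<Sum>l\<in>UNIV. (\<Sum>j\<in>UNIV. X$i$j * X$l$j) *\<^sub>R (c i *v (c l *v x))) = - NX X *\<^sub>R x"
proof -
  have "(\<Sum>i\<in>UNIV. \<Sum>l\<in>UNIV. (\<Sum>j\<in>UNIV. X$i$j * X$l$j) *\<^sub>R (c i *v (c l *v x)))
     = - (\<Sum>i\<in>UNIV. (\<Sum>j\<in>UNIV. X$i$j * X$i$j)) *\<^sub>R x"
    by (rule symsum[OF cl]) (simp add: mult.commute)
  thus ?thesis by (simp add: NX_def)
qed


lemma S2:
  assumes cl: "clifford_module (c :: 'n::finite \<Rightarrow> complex^'m^'m)" and sk: "skew X"
  shows "(\<Sum>i\<in>UNIV. \<Sum>j\<in>UNIV. \<Sum>k\<in>UNIV. \<Sum>l\<in>UNIV. (X$i$k * X$j$l) *\<^sub>R Pv c x i j k l)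
     = - Cq c X x - (2 * NX X) *\<^sub>R x"
proof -
  have p: "Pv c x i j k l = - Pv c x i k j l - (if j = k then 2 else 0) *\<^sub>R (c i *v (c l *v x))" for i j k l
    unfolding Pv_def by (subst comm[OF cl, of j k]) (simp add: mv_diff mv_neg mv_scale)
  have "(\<Sum>i\<in>UNIV. \<Sum>j\<in>UNIV. \<Sum>k\<in>UNIV. \<Sum>l\<in>UNIV. (X$i$k * X$j$l) *\<^sub>R Pv c x i j k l)
    = (\<Sum>i\<in>UNIV. \<Sum>j\<in>UNIV. \<Sum>k\<in>UNIV. \<Sum>l\<in>UNIV. - ((X$i$k * X$j$l) *\<^sub>R Pv c x i k j l)
        - (X$i$k * X$j$l * (if j = k then 2 else 0)) *\<^sub>R (c i *v (c l *v x)))"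
    by (intro sum.cong refl) (subst p, simp add: scaleR_diff_right)
  also have "\<dots> = - (\<Sum>i\<in>UNIV. \<Sum>j\<in>UNIV. \<Sum>k\<in>UNIV. \<Sum>l\<in>UNIV. (X$i$k * X$j$l) *\<^sub>R Pv c x i k j l)
     - (\<Sum>i\<in>UNIV. \<Sum>j\<in>UNIV. \<Sum>k\<in>UNIV. \<Sum>l\<in>UNIV. (X$i$k * X$j$l * (if j = k then 2 else 0)) *\<^sub>R (c i *v (c l *v x)))"
    by (simp only: sum_subtractf sum_negf)
  also have "(\<Sum>i\<in>UNIV. \<Sum>j\<in>UNIV. \<Sum>k\<in>UNIV. \<Sum>l\<in>UNIV. (X$i$k * X$j$l) *\<^sub>R Pv c x i k j l) = Cq c X x"
    unfolding Cq_def by (rule sum.swap | (rule sum.cong[OF refl], rule sum.swap) | (rule sum.cong[OF refl], rule sum.cong[OF refl], rule sum.swap) | (rule sum.cong[OF refl], rule sum.cong[OF refl], rule sum.cong[OF refl], rule sum.swap))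
  also have "(\<Sum>i\<in>UNIV. \<Sum>j\<in>UNIV. \<Sum>k\<in>UNIV. \<Sum>l\<in>UNIV. (X$i$k * X$j$l * (if j = k then 2 else 0)) *\<^sub>R (c i *v (c l *v x)))
     = (\<Sum>i\<in>UNIV. \<Sum>j\<in>UNIV. \<Sum>l\<in>UNIV. \<Sum>k\<in>UNIV. (X$i$k * X$j$l * (if j = k then 2 else 0)) *\<^sub>R (c i *v (c l *v x)))"
    by (rule sum.swap | (rule sum.cong[OF refl], rule sum.swap) | (rule sum.cong[OF refl], rule sum.cong[OF refl], rule sum.swap) | (rule sum.cong[OF refl], rule sum.cong[OF refl], rule sum.cong[OF refl], rule sum.swap))
  also have "\<dots> = (\<Sum>i\<in>UNIV. \<Sum>j\<in>UNIV. \<Sum>l\<in>UNIV. (2 * X$i$j * X$j$l) *\<^sub>R (c i *v (c l *v x)))"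
    by (rule delta_sum | (rule sum.cong[OF refl], rule delta_sum) | (rule sum.cong[OF refl], rule sum.cong[OF refl], rule delta_sum) | (rule sum.cong[OF refl], rule sum.cong[OF refl], rule sum.cong[OF refl], rule delta_sum))
  also have "\<dots> = (\<Sum>i\<in>UNIV. \<Sum>l\<in>UNIV. \<Sum>j\<in>UNIV. (2 * X$i$j * X$j$l) *\<^sub>R (c i *v (c l *v x)))"
    by (rule sum.swap | (rule sum.cong[OF refl], rule sum.swap) | (rule sum.cong[OF refl], rule sum.cong[OF refl], rule sum.swap) | (rule sum.cong[OF refl], rule sum.cong[OF refl], rule sum.cong[OF refl], rule sum.swap))
  also have "\<dots> = 2 *\<^sub>R (\<Sum>i\<in>UNIV. \<Sum>l\<in>UNIV. (\<Sum>j\<in>UNIV. X$i$j * X$j$l) *\<^sub>R (c i *v (c l *v x)))"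
    by (simp add: scaleR_sum_right scaleR_sum_left mult.assoc)
  also have "\<dots> = (2 * NX X) *\<^sub>R x" using E1[OF cl sk] by simp
  finally show ?thesis .
qed

lemma S3:
  assumes cl: "clifford_module (c :: 'n::finite \<Rightarrow> complex^'m^'m)" and sk: "skew X"
  shows "(\<Sum>i\<in>UNIV. \<Sum>j\<in>UNIV. \<Sum>k\<in>UNIV. \<Sum>l\<in>UNIV. (X$i$l * X$j$k) *\<^sub>R Pv c x i j k l)
     = Cq c X x + (4 * NX X) *\<^sub>R x"
proof -
  have p: "Pv c x i j k l = Pv c x i l j k + (if j = l then 2 else 0) *\<^sub>R (c i *v (c k *v x))
       - (if k = l then 2 else 0) *\<^sub>R (c i *v (c j *v x))" for i j k l
    unfolding Pv_def
    apply (subst comm[OF cl, of k l])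
    apply (simp only: mv_diff mv_neg mv_scale)
    apply (subst comm[OF cl, of j l])
    by (simp add: mv_diff mv_neg mv_scale algebra_simps)
  have "(\<Sum>i\<in>UNIV. \<Sum>j\<in>UNIV. \<Sum>k\<in>UNIV. \<Sum>l\<in>UNIV. (X$i$l * X$j$k) *\<^sub>R Pv c x i j k l)
    = (\<Sum>i\<in>UNIV. \<Sum>j\<in>UNIV. \<Sum>k\<in>UNIV. \<Sum>l\<in>UNIV. (X$i$l * X$j$k) *\<^sub>R Pv c x i l j k
        + (X$i$l * X$j$k * (if j = l then 2 else 0)) *\<^sub>R (c i *v (c k *v x))
        - (X$i$l * X$j$k * (if k = l then 2 else 0)) *\<^sub>R (c i *v (c j *v x)))"
    by (intro sum.cong refl) (subst p, simp add: scaleR_diff_right scaleR_add_right)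
  also have "\<dots> = (\<Sum>i\<in>UNIV. \<Sum>j\<in>UNIV. \<Sum>k\<in>UNIV. \<Sum>l\<in>UNIV. (X$i$l * X$j$k) *\<^sub>R Pv c x i l j k)
     + (\<Sum>i\<in>UNIV. \<Sum>j\<in>UNIV. \<Sum>k\<in>UNIV. \<Sum>l\<in>UNIV. (X$i$l * X$j$k * (if j = l then 2 else 0)) *\<^sub>R (c i *v (c k *v x)))
     - (\<Sum>i\<in>UNIV. \<Sum>j\<in>UNIV. \<Sum>k\<in>UNIV. \<Sum>l\<in>UNIV. (X$i$l * X$j$k * (if k = l then 2 else 0)) *\<^sub>R (c i *v (c j *v x)))"
    by (simp only: sum_subtractf sum.distrib)
  also have "(\<Sum>i\<in>UNIV. \<Sum>j\<in>UNIV. \<Sum>k\<in>UNIV. \<Sum>l\<in>UNIV. (X$i$l * X$j$k) *\<^sub>R Pv c x i l j k) = Cq c X x"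
  proof -
    have "(\<Sum>i\<in>UNIV. \<Sum>j\<in>UNIV. \<Sum>k\<in>UNIV. \<Sum>l\<in>UNIV. (X$i$l * X$j$k) *\<^sub>R Pv c x i l j k)
      = (\<Sum>i\<in>UNIV. \<Sum>j\<in>UNIV. \<Sum>l\<in>UNIV. \<Sum>k\<in>UNIV. (X$i$l * X$j$k) *\<^sub>R Pv c x i l j k)"
      by (rule sum.swap | (rule sum.cong[OF refl], rule sum.swap) | (rule sum.cong[OF refl], rule sum.cong[OF refl], rule sum.swap) | (rule sum.cong[OF refl], rule sum.cong[OF refl], rule sum.cong[OF refl], rule sum.swap))
    also have "\<dots> = (\<Sum>i\<in>UNIV. \<Sum>l\<in>UNIV. \<Sum>j\<in>UNIV. \<Sum>k\<in>UNIV. (X$i$l * X$j$k) *\<^sub>R Pv c x i l j k)"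
      by (rule sum.swap | (rule sum.cong[OF refl], rule sum.swap) | (rule sum.cong[OF refl], rule sum.cong[OF refl], rule sum.swap) | (rule sum.cong[OF refl], rule sum.cong[OF refl], rule sum.cong[OF refl], rule sum.swap))
    finally show ?thesis unfolding Cq_def .
  qed
  also have "(\<Sum>i\<in>UNIV. \<Sum>j\<in>UNIV. \<Sum>k\<in>UNIV. \<Sum>l\<in>UNIV. (X$i$l * X$j$k * (if j = l then 2 else 0)) *\<^sub>R (c i *v (c k *v x)))
     = (\<Sum>i\<in>UNIV. \<Sum>j\<in>UNIV. \<Sum>k\<in>UNIV. (2 * X$i$j * X$j$k) *\<^sub>R (c i *v (c k *v x)))"
    by (rule delta_sum | (rule sum.cong[OF refl], rule delta_sum) | (rule sum.cong[OF refl], rule sum.cong[OF refl], rule delta_sum) | (rule sum.cong[OF refl], rule sum.cong[OF refl], rule sum.cong[OF refl], rule delta_sum))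
  also have "\<dots> = (\<Sum>i\<in>UNIV. \<Sum>k\<in>UNIV. \<Sum>j\<in>UNIV. (2 * X$i$j * X$j$k) *\<^sub>R (c i *v (c k *v x)))"
    by (rule sum.swap | (rule sum.cong[OF refl], rule sum.swap) | (rule sum.cong[OF refl], rule sum.cong[OF refl], rule sum.swap) | (rule sum.cong[OF refl], rule sum.cong[OF refl], rule sum.cong[OF refl], rule sum.swap))
  also have "\<dots> = 2 *\<^sub>R (\<Sum>i\<in>UNIV. \<Sum>k\<in>UNIV. (\<Sum>j\<in>UNIV. X$i$j * X$j$k) *\<^sub>R (c i *v (c k *v x)))"
    by (simp add: scaleR_sum_right scaleR_sum_left mult.assoc)
  also have "\<dots> = (2 * NX X) *\<^sub>R x" using E1[OF cl sk] by simp
  also have "(\<Sum>i\<in>UNIV. \<Sum>j\<in>UNIV. \<Sum>k\<in>UNIV. \<Sum>l\<in>UNIV. (X$i$l * X$j$k * (if k = l then 2 else 0)) *\<^sub>R (c i *v (c j *v x)))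
     = (\<Sum>i\<in>UNIV. \<Sum>j\<in>UNIV. \<Sum>k\<in>UNIV. (2 * X$i$k * X$j$k) *\<^sub>R (c i *v (c j *v x)))"
    by (rule delta_sum | (rule sum.cong[OF refl], rule delta_sum) | (rule sum.cong[OF refl], rule sum.cong[OF refl], rule delta_sum) | (rule sum.cong[OF refl], rule sum.cong[OF refl], rule sum.cong[OF refl], rule delta_sum))
  also have "\<dots> = 2 *\<^sub>R (\<Sum>i\<in>UNIV. \<Sum>j\<in>UNIV. (\<Sum>k\<in>UNIV. X$i$k * X$j$k) *\<^sub>R (c i *v (c j *v x)))"
    by (simp add: scaleR_sum_right scaleR_sum_left mult.assoc)
  also have "\<dots> = - (2 * NX X) *\<^sub>R x" using E2[OF cl] by simp
  finally have h: "(\<Sum>i\<in>UNIV. \<Sum>j\<in>UNIV. \<Sum>k\<in>UNIV. \<Sum>l\<in>UNIV. (X$i$l * X$j$k) *\<^sub>R Pv c x i j k l)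
     = Cq c X x + (2 * NX X) *\<^sub>R x - (- (2 * NX X)) *\<^sub>R x" .
  have "(2 * NX X) *\<^sub>R x - (- (2 * NX X)) *\<^sub>R x = (2 * NX X - - (2 * NX X)) *\<^sub>R x"
    by (simp only: scaleR_left_diff_distrib)
  also have "(2 * NX X - - (2 * NX X)) = 4 * NX X" by simp
  finally show ?thesis using h by (simp only: add_diff_eq[symmetric])
qed


lemma alg: "2 *\<^sub>R C - 2 *\<^sub>R (- C - a *\<^sub>R x) + 2 *\<^sub>R (C + b *\<^sub>R x)
   = 6 *\<^sub>R C + (2 * a + 2 * b) *\<^sub>R (x :: 'a::real_vector)"
proof -
  have "6 *\<^sub>R C = (2 + 2 + 2) *\<^sub>R C" by simp
  also have "\<dots> = 2 *\<^sub>R C + 2 *\<^sub>R C + 2 *\<^sub>R C" by (simp only: scaleR_left_distrib)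
  finally have h: "6 *\<^sub>R C = 2 *\<^sub>R C + 2 *\<^sub>R C + 2 *\<^sub>R C" .
  show ?thesis unfolding h by (simp add: algebra_simps)
qed

lemma wedge_id:
  assumes cl: "clifford_module (c :: 'n::finite \<Rightarrow> complex^'m^'m)" and sk: "skew X"
  shows "(\<Sum>i\<in>UNIV. \<Sum>j\<in>UNIV. \<Sum>k\<in>UNIV. \<Sum>l\<in>UNIV. wedge22 X X i j k l *\<^sub>R Pv c x i j k l)
     = 6 *\<^sub>R Cq c X x + (12 * NX X) *\<^sub>R x"
proof -
  have w: "wedge22 X X i j k l *\<^sub>R v = 2 *\<^sub>R ((X$i$j * X$k$l) *\<^sub>R v) - 2 *\<^sub>R ((X$i$k * X$j$l) *\<^sub>R v)
     + 2 *\<^sub>R ((X$i$l * X$j$k) *\<^sub>R v)" for i j k l and v :: "complex^'m"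
  proof -
    have "wedge22 X X i j k l = 2 * (X$i$j * X$k$l) - 2 * (X$i$k * X$j$l) + 2 * (X$i$l * X$j$k)"
      by (simp add: wedge22_def algebra_simps)
    thus ?thesis by (simp add: scaleR_left_diff_distrib scaleR_left_distrib)
  qed
  have "(\<Sum>i\<in>UNIV. \<Sum>j\<in>UNIV. \<Sum>k\<in>UNIV. \<Sum>l\<in>UNIV. wedge22 X X i j k l *\<^sub>R Pv c x i j k l)
     = 2 *\<^sub>R Cq c X x
       - 2 *\<^sub>R (\<Sum>i\<in>UNIV. \<Sum>j\<in>UNIV. \<Sum>k\<in>UNIV. \<Sum>l\<in>UNIV. (X$i$k * X$j$l) *\<^sub>R Pv c x i j k l)
       + 2 *\<^sub>R (\<Sum>i\<in>UNIV. \<Sum>j\<in>UNIV. \<Sum>k\<in>UNIV. \<Sum>l\<in>UNIV. (X$i$l * X$j$k) *\<^sub>R Pv c x i j k l)"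
    unfolding Cq_def w by (simp only: sum_subtractf sum.distrib scaleR_sum_right)
  also have "\<dots> = 2 *\<^sub>R Cq c X x - 2 *\<^sub>R (- Cq c X x - (2 * NX X) *\<^sub>R x)
       + 2 *\<^sub>R (Cq c X x + (4 * NX X) *\<^sub>R x)"
    by (simp only: S2[OF cl sk] S3[OF cl sk])
  also have "\<dots> = 6 *\<^sub>R Cq c X x + (2 * (2 * NX X) + 2 * (4 * NX X)) *\<^sub>R x"
    by (rule alg)
  also have "(2 * (2 * NX X) + 2 * (4 * NX X)) = 12 * NX X" by simp
  finally show ?thesis .
qed

theorem proposition7p1:
  fixes g B :: "(real^'n^'n) set" and c :: "'n \<Rightarrow> complex^'m^'m" and x :: "complex^'m"
  assumes "lie_subalgebra_so g" and "g \<noteq> {0}"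
    and "orthonormal_basis_of B g"
    and "spinor_module c"
    and "x \<noteq> 0" and "\<forall>A\<in>g. spin_act c A x = 0"
  shows "char_form B \<noteq> (\<lambda>i j k l. 0)"
proof
  assume T0: "char_form B = (\<lambda>i j k l. 0)"
  have cl: "clifford_module c" using assms(4) by (simp add: spinor_module_def)
  have finB: "finite B" and BG: "B \<subseteq> g" and spB: "span B = g"
    and nB: "\<And>X. X \<in> B \<Longrightarrow> form_inner2 X X = 1"
    using assms(3) by (auto simp: orthonormal_basis_of_def)
  have each: "(\<Sum>i\<in>UNIV. \<Sum>j\<in>UNIV. \<Sum>k\<in>UNIV. \<Sum>l\<in>UNIV. wedge22 X X i j k l *\<^sub>R Pv c x i j k l)
     = 24 *\<^sub>R x" if XB: "X \<in> B" for X
  proof -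
    have Xg: "X \<in> g" using XB BG by auto
    have sk: "skew X" using assms(1) Xg by (simp add: lie_subalgebra_so_def)
    have N: "NX X = 2" using nB[OF XB] by (simp add: form_inner2_def NX_def)
    define Q where "Q = (\<Sum>k\<in>UNIV. \<Sum>l\<in>UNIV. X$k$l *\<^sub>R (c k *v (c l *v x)))"
    have "spin_act c X x = (\<Sum>k\<in>UNIV. \<Sum>l\<in>UNIV. (X$k$l / 4) *\<^sub>R (c k *v (c l *v x)))"
      by (simp only: spin_act_def smult_real)
    also have "\<dots> = (1/4) *\<^sub>R Q" by (simp add: Q_def scaleR_sum_right)
    finally have "(1/4) *\<^sub>R Q = 0" using assms(6) Xg by simp
    hence Q0: "Q = 0" by simp
    have "Cq c X x = (\<Sum>i\<in>UNIV. \<Sum>j\<in>UNIV. X$i$j *\<^sub>R (c i *v (c j *v Q)))"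
      by (simp add: Cq_def Pv_def Q_def mv_sum mv_scale scaleR_sum_right)
    hence C0: "Cq c X x = 0" by (simp add: Q0 mv_zero)
    show ?thesis using wedge_id[OF cl sk, of x] C0 N by simp
  qed
  have "(\<Sum>X\<in>B. \<Sum>i\<in>UNIV. \<Sum>j\<in>UNIV. \<Sum>k\<in>UNIV. \<Sum>l\<in>UNIV. wedge22 X X i j k l *\<^sub>R Pv c x i j k l)
     = (\<Sum>i\<in>UNIV. \<Sum>X\<in>B. \<Sum>j\<in>UNIV. \<Sum>k\<in>UNIV. \<Sum>l\<in>UNIV. wedge22 X X i j k l *\<^sub>R Pv c x i j k l)"
    by (rule sum.swap | (rule sum.cong[OF refl], rule sum.swap) | (rule sum.cong[OF refl], rule sum.cong[OF refl], rule sum.swap) | (rule sum.cong[OF refl], rule sum.cong[OF refl], rule sum.cong[OF refl], rule sum.swap))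
  also have "\<dots> = (\<Sum>i\<in>UNIV. \<Sum>j\<in>UNIV. \<Sum>X\<in>B. \<Sum>k\<in>UNIV. \<Sum>l\<in>UNIV. wedge22 X X i j k l *\<^sub>R Pv c x i j k l)"
    by (rule sum.swap | (rule sum.cong[OF refl], rule sum.swap) | (rule sum.cong[OF refl], rule sum.cong[OF refl], rule sum.swap) | (rule sum.cong[OF refl], rule sum.cong[OF refl], rule sum.cong[OF refl], rule sum.swap))
  also have "\<dots> = (\<Sum>i\<in>UNIV. \<Sum>j\<in>UNIV. \<Sum>k\<in>UNIV. \<Sum>X\<in>B. \<Sum>l\<in>UNIV. wedge22 X X i j k l *\<^sub>R Pv c x i j k l)"
    by (rule sum.swap | (rule sum.cong[OF refl], rule sum.swap) | (rule sum.cong[OF refl], rule sum.cong[OF refl], rule sum.swap) | (rule sum.cong[OF refl], rule sum.cong[OF refl], rule sum.cong[OF refl], rule sum.swap))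
  also have "\<dots> = (\<Sum>i\<in>UNIV. \<Sum>j\<in>UNIV. \<Sum>k\<in>UNIV. \<Sum>l\<in>UNIV. \<Sum>X\<in>B. wedge22 X X i j k l *\<^sub>R Pv c x i j k l)"
    by (rule sum.swap | (rule sum.cong[OF refl], rule sum.swap) | (rule sum.cong[OF refl], rule sum.cong[OF refl], rule sum.swap) | (rule sum.cong[OF refl], rule sum.cong[OF refl], rule sum.cong[OF refl], rule sum.swap))
  also have "\<dots> = (\<Sum>i\<in>UNIV. \<Sum>j\<in>UNIV. \<Sum>k\<in>UNIV. \<Sum>l\<in>UNIV. char_form B i j k l *\<^sub>R Pv c x i j k l)"
    by (simp add: char_form_def scaleR_sum_left)
  also have "\<dots> = 0" using T0 by simp
  finally have S: "(\<Sum>X\<in>B. \<Sum>i\<in>UNIV. \<Sum>j\<in>UNIV. \<Sum>k\<in>UNIV. \<Sum>l\<in>UNIV. wedge22 X X i j k l *\<^sub>R Pv c x i j k l) = 0" .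
  have "(\<Sum>X\<in>B. \<Sum>i\<in>UNIV. \<Sum>j\<in>UNIV. \<Sum>k\<in>UNIV. \<Sum>l\<in>UNIV. wedge22 X X i j k l *\<^sub>R Pv c x i j k l)
     = (\<Sum>X\<in>B. 24 *\<^sub>R x)" by (rule sum.cong[OF refl], rule each)
  also have "\<dots> = real (card B) *\<^sub>R (24 *\<^sub>R x)" by (rule sum_constant_scaleR)
  finally have "real (card B) *\<^sub>R (24 *\<^sub>R x) = 0" using S by simp
  hence "(24 * real (card B)) *\<^sub>R x = 0" by (simp only: scaleR_scaleR mult.commute)
  hence "24 * real (card B) = 0" using assms(5) by (simp only: scaleR_eq_0_iff) blast
  hence "card B = 0" by simp
  hence "B = {}" using finB by simp
  hence "g = {0}" using spB by simp
  thus False using assms(2) by simp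
qed

end
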